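(* Let $d\ge 2$, let $k\ge 0$ and $c>0$ be fixed, and $p=\frac{c}{n}$. Fix $\tau\in\Delta_{n-1}(d-1)$. For $Y\in Y_d(n,p)$ define $\mathcal{S}_0(Y)=\tau$ and, for $i\ge1$, let $\mathcal{S}_i(Y)$ be the union of $\mathcal{S}_{i-1}(Y)$ and the complex generated by all $d$-simplices of $Y$ that contain some $(d-1)$-face of $\mathcal{S}_{i-1}(Y)$. Let $A_{k+1}$ be the event that $\mathcal{S}_{k+1}(Y)$ is a $d$-tree, and let $D$ be the event that every $(d-1)$-simplex $\eta\in\Delta_{n-1}(d-1)$ is contained in at most $\log n$ $d$-simplices of $Y$. Then $\Pr[A_{k+1}\cap D]=1-o(1)$ as $n\to\infty$.
   Context: $\Delta_{n-1}$ denotes the $(n-1)$-simplex on vertex set $[n]$, $\Delta_{n-1}(i)$ its set of $i$-faces. $Y_d(n,p)$ is the probability space of complexes $\Delta_{n-1}^{(d-1)}\subset Y\subset\Delta_{n-1}^{(d)}$ in which each $d$-simplex is included independently with probability $p$. A simplicial complex $T$ on vertex set $V$ with $|V|=\ell\ge d$ is a $d$-tree if there is an ordering $V=\{v_1,\dots,v_\ell\}$ such that for every $d+1\le i\le \ell$ the link of $v_i$ in the induced subcomplex $T[v_1,\dots,v_i]$ is a $(d-1)$-dimensional simplex. *)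

theory Defs
  imports Complex_Main
begin

text \<open>Vertex set [n] is rendered as {0..<n}. A simplex is a finite nonempty set of
vertices; a simplicial complex is the set of its (nonempty) faces.\<close>

definition faces :: "nat \<Rightarrow> nat \<Rightarrow> nat set set" where
  "faces n j = {\<sigma>. \<sigma> \<subseteq> {0..<n} \<and> card \<sigma> = Suc j}"

definition gen :: "nat set set \<Rightarrow> nat set set" where
  "gen F = {\<sigma>. \<sigma> \<noteq> {} \<and> (\<exists>f\<in>F. \<sigma> \<subseteq> f)}"

text \<open>Y is given by its set of d-simplices (a subset of faces n d).
  S Y d \<tau> i is the complex S_i(Y).\<close>
primrec S :: "nat set set \<Rightarrow> nat \<Rightarrow> nat set \<Rightarrow> nat \<Rightarrow> nat set set" where
  "S Y d \<tau> 0 = gen {\<tau>}"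
| "S Y d \<tau> (Suc i) = S Y d \<tau> i \<union>
      gen {\<sigma>\<in>Y. \<exists>\<eta>\<in>S Y d \<tau> i. card \<eta> = d \<and> \<eta> \<subseteq> \<sigma>}"

definition induced :: "nat set set \<Rightarrow> nat set \<Rightarrow> nat set set" where
  "induced K W = {\<sigma>\<in>K. \<sigma> \<subseteq> W}"

definition link :: "nat set set \<Rightarrow> nat \<Rightarrow> nat set set" where
  "link K v = {\<sigma>\<in>K. v \<notin> \<sigma> \<and> insert v \<sigma> \<in> K}"

definition is_simplex :: "nat set set \<Rightarrow> nat \<Rightarrow> bool" where
  "is_simplex K j \<longleftrightarrow> (\<exists>s. finite s \<and> card s = Suc j \<and> K = gen {s})"

definition is_dtree :: "nat \<Rightarrow> nat set set \<Rightarrow> bool" where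
  "is_dtree d T \<longleftrightarrow> finite (\<Union>T) \<and> card (\<Union>T) \<ge> d \<and>
     (\<exists>vs. distinct vs \<and> set vs = \<Union>T \<and>
        (\<forall>i. d + 1 \<le> i \<and> i \<le> length vs \<longrightarrow>
           is_simplex (link (induced T (set (take i vs))) (vs ! (i - 1))) (d - 1)))"

text \<open>Probability of an event E (a predicate on the set of d-simplices of Y)
  in Y_d(n,p): each d-simplex independently with probability p.\<close>
definition prob_Yd :: "nat \<Rightarrow> nat \<Rightarrow> real \<Rightarrow> (nat set set \<Rightarrow> bool) \<Rightarrow> real" where
  "prob_Yd n d p E = (\<Sum>Y\<in>{Y. Y \<subseteq> faces n d \<and> E Y}.
      p ^ card Y * (1 - p) ^ (card (faces n d) - card Y))"

end

theory Submission
  imports Defs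
begin


definition P :: "'a set \<Rightarrow> real \<Rightarrow> ('a set \<Rightarrow> bool) \<Rightarrow> real" where
  "P F p E = (\<Sum>Y\<in>{Y. Y \<subseteq> F \<and> E Y}. p ^ card Y * (1 - p) ^ (card F - card Y))"

lemma prob_Yd_P: "prob_Yd n d p E = P (faces n d) p E"
  unfolding prob_Yd_def P_def ..

lemma P_cong: "(\<And>Y. Y \<subseteq> F \<Longrightarrow> E Y = E' Y) \<Longrightarrow> P F p E = P F p E'"
  unfolding P_def by (rule sum.cong) auto

lemma P_split:
  assumes F: "finite F" and a: "a \<in> F"
  shows "P F p E = p * P (F - {a}) p (\<lambda>Y. E (insert a Y)) + (1 - p) * P (F - {a}) p E"
proof -
  let ?w = "\<lambda>F Y. p ^ card Y * (1 - p) ^ (card F - card Y)"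
  have fin: "finite {Y. Y \<subseteq> F \<and> E Y}" using F by (simp add: finite_subset[of _ "Pow F"])
  have split: "{Y. Y \<subseteq> F \<and> E Y} = insert a ` {Y. Y \<subseteq> F - {a} \<and> E (insert a Y)} \<union> {Y. Y \<subseteq> F - {a} \<and> E Y}"
  proof (rule set_eqI, rule iffI)
    fix Y assume "Y \<in> {Y. Y \<subseteq> F \<and> E Y}"
    then show "Y \<in> insert a ` {Y. Y \<subseteq> F - {a} \<and> E (insert a Y)} \<union> {Y. Y \<subseteq> F - {a} \<and> E Y}"
    proof (cases "a \<in> Y")
      case True
      then have "Y = insert a (Y - {a})" by auto
      then show ?thesis using \<open>Y \<in> _\<close> by (auto intro!: image_eqI[of _ _ "Y - {a}"])
    qed auto
  qed (use a in auto)
  have disj: "insert a ` {Y. Y \<subseteq> F - {a} \<and> E (insert a Y)} \<inter> {Y. Y \<subseteq> F - {a} \<and> E Y} = {}" by auto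
  have inj: "inj_on (insert a) {Y. Y \<subseteq> F - {a} \<and> E (insert a Y)}"
    by (rule inj_onI) (metis Diff_insert_absorb mem_Collect_eq subset_Diff_insert)
  have cF: "card F = Suc (card (F - {a}))" using card_Suc_Diff1[OF F a] by simp
  have s1: "(\<Sum>Y\<in>insert a ` {Y. Y \<subseteq> F - {a} \<and> E (insert a Y)}. ?w F Y)
      = p * P (F - {a}) p (\<lambda>Y. E (insert a Y))"
  proof -
    have "(\<Sum>Y\<in>insert a ` {Y. Y \<subseteq> F - {a} \<and> E (insert a Y)}. ?w F Y)
       = (\<Sum>Y\<in>{Y. Y \<subseteq> F - {a} \<and> E (insert a Y)}. ?w F (insert a Y))"
      by (rule sum.reindex[OF inj, unfolded comp_def])
    also have "\<dots> = (\<Sum>Y\<in>{Y. Y \<subseteq> F - {a} \<and> E (insert a Y)}. p * ?w (F - {a}) Y)"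
    proof (rule sum.cong[OF refl])
      fix Y assume "Y \<in> {Y. Y \<subseteq> F - {a} \<and> E (insert a Y)}"
      then have Y: "Y \<subseteq> F - {a}" by auto
      then have fY: "finite Y" "a \<notin> Y" using F finite_subset by auto
      then show "?w F (insert a Y) = p * ?w (F - {a}) Y" using cF by simp
    qed
    finally show ?thesis unfolding P_def by (simp add: sum_distrib_left)
  qed
  have s2: "(\<Sum>Y\<in>{Y. Y \<subseteq> F - {a} \<and> E Y}. ?w F Y) = (1 - p) * P (F - {a}) p E"
  proof -
    have "(\<Sum>Y\<in>{Y. Y \<subseteq> F - {a} \<and> E Y}. ?w F Y) = (\<Sum>Y\<in>{Y. Y \<subseteq> F - {a} \<and> E Y}. (1 - p) * ?w (F - {a}) Y)"
    proof (rule sum.cong[OF refl])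
      fix Y assume "Y \<in> {Y. Y \<subseteq> F - {a} \<and> E Y}"
      then have Y: "Y \<subseteq> F - {a}" by auto
      then have "card Y \<le> card (F - {a})" using F by (simp add: card_mono)
      then have "card F - card Y = Suc (card (F - {a}) - card Y)" using cF by simp
      then show "?w F Y = (1 - p) * ?w (F - {a}) Y" by simp
    qed
    then show ?thesis unfolding P_def by (simp add: sum_distrib_left)
  qed
  have "P F p E = (\<Sum>Y\<in>insert a ` {Y. Y \<subseteq> F - {a} \<and> E (insert a Y)}. ?w F Y) + (\<Sum>Y\<in>{Y. Y \<subseteq> F - {a} \<and> E Y}. ?w F Y)"
    unfolding P_def split
    by (rule sum.union_disjoint) (use F disj in \<open>auto intro: finite_subset[of _ "Pow F"]\<close>)
  then show ?thesis using s1 s2 by simp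
qed

lemma P_True: "finite F \<Longrightarrow> P F p (\<lambda>_. True) = 1"
proof (induction F rule: finite_induct)
  case empty
  then show ?case by (simp add: P_def)
next
  case (insert a F)
  have "P (insert a F) p (\<lambda>_. True) = p * P F p (\<lambda>_. True) + (1 - p) * P F p (\<lambda>_. True)"
    using P_split[of "insert a F" a p "\<lambda>_. True"] insert by simp
  then show ?case using insert by simp
qed

lemma P_Pow: "finite F \<Longrightarrow> P F p E = (\<Sum>Y\<in>Pow F. if E Y then p ^ card Y * (1 - p) ^ (card F - card Y) else 0)"
  unfolding P_def by (simp add: sum.If_cases Int_def conj_commute)

lemma w_nonneg: "0 \<le> p \<Longrightarrow> p \<le> 1 \<Longrightarrow> (0::real) \<le> p ^ a * (1 - p) ^ b" by simp

lemma P_nonneg: "0 \<le> p \<Longrightarrow> p \<le> 1 \<Longrightarrow> 0 \<le> P F p E"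
  unfolding P_def by (rule sum_nonneg) simp

lemma P_mono:
  assumes "finite F" "0 \<le> p" "p \<le> 1" "\<And>Y. Y \<subseteq> F \<Longrightarrow> E Y \<Longrightarrow> E' Y"
  shows "P F p E \<le> P F p E'"
  unfolding P_def by (rule sum_mono2) (use assms in \<open>auto intro: finite_subset[of _ "Pow F"]\<close>)

lemma P_compl: "finite F \<Longrightarrow> P F p E = 1 - P F p (\<lambda>Y. \<not> E Y)"
proof -
  assume F: "finite F"
  have "P F p (\<lambda>_. True) = P F p E + P F p (\<lambda>Y. \<not> E Y)"
    unfolding P_Pow[OF F] sum.distrib[symmetric] by (rule sum.cong) auto
  then show ?thesis using P_True[OF F] by simp
qed

lemma P_union_bound:
  assumes F: "finite F" and X: "finite X" and p: "0 \<le> p" "p \<le> 1"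
  shows "P F p (\<lambda>Y. \<exists>x\<in>X. E x Y) \<le> (\<Sum>x\<in>X. P F p (E x))"
proof -
  let ?w = "\<lambda>Y. p ^ card Y * (1 - p) ^ (card F - card Y)"
  have "P F p (\<lambda>Y. \<exists>x\<in>X. E x Y) \<le> (\<Sum>Y\<in>Pow F. \<Sum>x\<in>X. if E x Y then ?w Y else 0)"
    unfolding P_Pow[OF F]
  proof (rule sum_mono)
    fix Y assume "Y \<in> Pow F"
    show "(if \<exists>x\<in>X. E x Y then ?w Y else 0) \<le> (\<Sum>x\<in>X. if E x Y then ?w Y else 0)"
    proof (cases "\<exists>x\<in>X. E x Y")
      case True
      then obtain x where x: "x \<in> X" "E x Y" by blast
      have "?w Y = (if E x Y then ?w Y else 0)" using x by simp
      also have "\<dots> \<le> (\<Sum>x\<in>X. if E x Y then ?w Y else 0)"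
        by (rule member_le_sum) (use x X p in auto)
      finally show ?thesis using True by simp
    next
      case False
      then show ?thesis by (simp add: sum_nonneg p)
    qed
  qed
  also have "\<dots> = (\<Sum>x\<in>X. P F p (E x))"
    unfolding P_Pow[OF F] by (rule sum.swap)
  finally show ?thesis .
qed

lemma P_disj: 
  assumes F: "finite F" and p: "0 \<le> p" "p \<le> 1"
  shows "P F p (\<lambda>Y. A Y \<or> B Y) \<le> P F p A + P F p B"
proof -
  have "P F p (\<lambda>Y. A Y \<or> B Y) = P F p (\<lambda>Y. \<exists>x\<in>{True, False}. (if x then A Y else B Y))"
    by (rule P_cong) auto
  also have "\<dots> \<le> (\<Sum>x\<in>{True,False}. P F p (\<lambda>Y. if x then A Y else B Y))"
    by (rule P_union_bound[OF F _ p]) simp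
  finally show ?thesis by simp
qed

lemma P_subset:
  assumes "finite A" "finite F" "A \<subseteq> F"
  shows "P F p (\<lambda>Y. A \<subseteq> Y) = p ^ card A"
  using assms
proof (induction A arbitrary: F rule: finite_induct)
  case empty
  then show ?case using P_True[of F p] by simp
next
  case (insert a A)
  have "P F p (\<lambda>Y. insert a A \<subseteq> Y) = p * P (F - {a}) p (\<lambda>Y. insert a A \<subseteq> insert a Y)
         + (1 - p) * P (F - {a}) p (\<lambda>Y. insert a A \<subseteq> Y)"
    by (rule P_split) (use insert in auto)
  also have "P (F - {a}) p (\<lambda>Y. insert a A \<subseteq> Y) = P (F - {a}) p (\<lambda>Y. False)"
    by (rule P_cong) auto
  also have "P (F - {a}) p (\<lambda>Y. False) = 0" by (simp add: P_def)
  also have "P (F - {a}) p (\<lambda>Y. insert a A \<subseteq> insert a Y) = P (F - {a}) p (\<lambda>Y. A \<subseteq> Y)"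
    by (rule P_cong) (use insert in auto)
  also have "\<dots> = p ^ card A" using insert by auto
  finally show ?case using insert by simp
qed

lemma P_point:
  assumes F: "finite F" and a: "a \<in> F"
  shows "P F p (\<lambda>Y. a \<in> Y \<and> \<Psi> (Y - {a})) = p * P F p (\<lambda>Y. \<Psi> (Y - {a}))"
proof -
  have 1: "P F p (\<lambda>Y. a \<in> Y \<and> \<Psi> (Y - {a})) = p * P (F - {a}) p \<Psi>"
  proof -
    have "P F p (\<lambda>Y. a \<in> Y \<and> \<Psi> (Y - {a})) = p * P (F - {a}) p (\<lambda>Y. a \<in> insert a Y \<and> \<Psi> (insert a Y - {a}))
         + (1 - p) * P (F - {a}) p (\<lambda>Y. a \<in> Y \<and> \<Psi> (Y - {a}))"
      by (rule P_split[OF F a])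
    also have "P (F - {a}) p (\<lambda>Y. a \<in> Y \<and> \<Psi> (Y - {a})) = P (F - {a}) p (\<lambda>Y. False)"
      by (rule P_cong) auto
    also have "P (F - {a}) p (\<lambda>Y. a \<in> insert a Y \<and> \<Psi> (insert a Y - {a})) = P (F - {a}) p \<Psi>"
      by (rule P_cong) (metis Diff_insert_absorb insertI1 subset_Diff_insert)
    finally show ?thesis by (simp add: P_def)
  qed
  have 2: "P F p (\<lambda>Y. \<Psi> (Y - {a})) = P (F - {a}) p \<Psi>"
  proof -
    have "P F p (\<lambda>Y. \<Psi> (Y - {a})) = p * P (F - {a}) p (\<lambda>Y. \<Psi> (insert a Y - {a}))
         + (1 - p) * P (F - {a}) p (\<lambda>Y. \<Psi> (Y - {a}))"
      by (rule P_split[OF F a])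
    also have "P (F - {a}) p (\<lambda>Y. \<Psi> (insert a Y - {a})) = P (F - {a}) p \<Psi>"
      by (rule P_cong) (metis Diff_insert_absorb subset_Diff_insert)
    also have "P (F - {a}) p (\<lambda>Y. \<Psi> (Y - {a})) = P (F - {a}) p \<Psi>"
      by (rule P_cong) (metis Diff_empty Diff_insert0 subset_Diff_insert)
    finally show ?thesis by (simp add: algebra_simps)
  qed
  show ?thesis using 1 2 by simp
qed

lemma P_count:
  assumes F: "finite F" and p: "0 \<le> p" "p \<le> 1"
    and B: "\<And>Y. Y \<subseteq> F \<Longrightarrow> real (card {x\<in>F. Q x Y}) \<le> B" and B0: "0 \<le> B"
  shows "(\<Sum>x\<in>F. P F p (Q x)) \<le> B"
proof -
  let ?w = "\<lambda>Y. p ^ card Y * (1 - p) ^ (card F - card Y)"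
  have "(\<Sum>x\<in>F. P F p (Q x)) = (\<Sum>Y\<in>Pow F. \<Sum>x\<in>F. if Q x Y then ?w Y else 0)"
    unfolding P_Pow[OF F] by (rule sum.swap)
  also have "\<dots> = (\<Sum>Y\<in>Pow F. ?w Y * real (card {x\<in>F. Q x Y}))"
    by (rule sum.cong[OF refl]) (simp add: sum.If_cases F Int_def)
  also have "\<dots> \<le> (\<Sum>Y\<in>Pow F. ?w Y * B)"
    by (rule sum_mono, rule mult_left_mono) (use B p in auto)
  also have "\<dots> = B * P F p (\<lambda>_. True)"
    unfolding P_Pow[OF F] by (simp add: sum_distrib_left mult.commute)
  finally show ?thesis using P_True[OF F] by simp
qed



lemma gen_iff: "x \<in> gen F \<longleftrightarrow> x \<noteq> {} \<and> (\<exists>f\<in>F. x \<subseteq> f)"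
  unfolding gen_def by simp

lemma S_Suc_mono: "S Y d \<tau> i \<subseteq> S Y d \<tau> (Suc i)" by auto

lemma S_mono_level: "i \<le> j \<Longrightarrow> S Y d \<tau> i \<subseteq> S Y d \<tau> j"
  by (induction j) (auto simp: le_Suc_eq)

lemma S_mono_Y: "Y \<subseteq> Y' \<Longrightarrow> S Y d \<tau> i \<subseteq> S Y' d \<tau> i"
proof (induction i)
  case 0 then show ?case by simp
next
  case (Suc i)
  then show ?case by (auto simp: gen_iff) blast
qed

lemma S_nonempty: "f \<in> S Y d \<tau> i \<Longrightarrow> f \<noteq> {}"
  by (induction i) (auto simp: gen_iff)

lemma S_closed: "f \<in> S Y d \<tau> i \<Longrightarrow> g \<subseteq> f \<Longrightarrow> g \<noteq> {} \<Longrightarrow> g \<in> S Y d \<tau> i"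
proof (induction i arbitrary: f)
  case 0 then show ?case by (auto simp: gen_iff)
next
  case (Suc i)
  show ?case
  proof (cases "f \<in> S Y d \<tau> i")
    case True then show ?thesis using Suc by auto
  next
    case False
    then have "f \<in> gen {\<sigma> \<in> Y. \<exists>\<eta>\<in>S Y d \<tau> i. card \<eta> = d \<and> \<eta> \<subseteq> \<sigma>}" using Suc by auto
    then obtain \<sigma> where "\<sigma> \<in> {\<sigma> \<in> Y. \<exists>\<eta>\<in>S Y d \<tau> i. card \<eta> = d \<and> \<eta> \<subseteq> \<sigma>}" "f \<subseteq> \<sigma>"
      unfolding gen_iff by blast
    then have "g \<in> gen {\<sigma> \<in> Y. \<exists>\<eta>\<in>S Y d \<tau> i. card \<eta> = d \<and> \<eta> \<subseteq> \<sigma>}"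
      using Suc.prems unfolding gen_iff by blast
    then show ?thesis by simp
  qed
qed

lemma S_cases: "f \<in> S Y d \<tau> i \<Longrightarrow> f \<subseteq> \<tau> \<or> (\<exists>\<sigma>\<in>Y. f \<subseteq> \<sigma>)"
  by (induction i) (auto simp: gen_iff)

lemma S_Union: "\<Union>(S Y d \<tau> i) \<subseteq> \<tau> \<union> \<Union>Y"
  using S_cases by blast

lemma S_remove:
  assumes "\<sigma> \<noteq> {}" "\<sigma> \<notin> S Y d \<tau> j"
  shows "S (Y - {\<sigma>}) d \<tau> j = S Y d \<tau> j"
  using assms
proof (induction j)
  case 0 then show ?case by simp
next
  case (Suc j)
  have nj: "\<sigma> \<notin> S Y d \<tau> j" using Suc.prems S_Suc_mono by blast
  have IH: "S (Y - {\<sigma>}) d \<tau> j = S Y d \<tau> j" using Suc.IH[OF Suc.prems(1) nj] .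
  have "{\<rho> \<in> Y - {\<sigma>}. \<exists>\<eta>\<in>S Y d \<tau> j. card \<eta> = d \<and> \<eta> \<subseteq> \<rho>} = {\<rho> \<in> Y. \<exists>\<eta>\<in>S Y d \<tau> j. card \<eta> = d \<and> \<eta> \<subseteq> \<rho>}"
  proof -
    have "\<sigma> \<notin> {\<rho> \<in> Y. \<exists>\<eta>\<in>S Y d \<tau> j. card \<eta> = d \<and> \<eta> \<subseteq> \<rho>}"
    proof
      assume "\<sigma> \<in> {\<rho> \<in> Y. \<exists>\<eta>\<in>S Y d \<tau> j. card \<eta> = d \<and> \<eta> \<subseteq> \<rho>}"
      then have "\<sigma> \<in> gen {\<rho> \<in> Y. \<exists>\<eta>\<in>S Y d \<tau> j. card \<eta> = d \<and> \<eta> \<subseteq> \<rho>}"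
        using Suc.prems(1) by (auto simp: gen_iff)
      then show False using Suc.prems(2) by simp
    qed
    then show ?thesis by auto
  qed
  then show ?case using IH by simp
qed



lemma Union_gen: "(\<And>x. x \<in> X \<Longrightarrow> x \<noteq> {}) \<Longrightarrow> \<Union>(gen X) = \<Union>X"
  unfolding gen_def by blast

lemma tree_step:
  assumes d: "d \<ge> 1"
    and Y: "finite Y" "\<And>\<sigma>. \<sigma> \<in> Y \<Longrightarrow> finite \<sigma> \<and> card \<sigma> = Suc d"
    and N: "\<And>\<sigma>. \<sigma> \<in> Y \<Longrightarrow> \<not> \<sigma> \<subseteq> \<Union>(S (Y - {\<sigma>}) d \<tau> m)"
    and jm: "Suc j \<le> m"
    and IH: "is_dtree d (S Y d \<tau> j)"
  shows "is_dtree d (S Y d \<tau> (Suc j))"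
proof -
  define K where "K = S Y d \<tau> j"
  define W where "W = \<Union>K"
  define New where "New = {\<sigma> \<in> Y. \<exists>\<eta>\<in>K. card \<eta> = d \<and> \<eta> \<subseteq> \<sigma>}"
  define NN where "NN = New - K"
  define K' where "K' = S Y d \<tau> (Suc j)"
  have K'eq: "K' = K \<union> gen NN"
  proof -
    have "K' = K \<union> gen New" unfolding K'_def K_def New_def by simp
    also have "\<dots> = K \<union> gen NN"
    proof
      show "K \<union> gen New \<subseteq> K \<union> gen NN"
      proof
        fix f assume "f \<in> K \<union> gen New"
        then show "f \<in> K \<union> gen NN"
        proof
          assume "f \<in> gen New"
          then obtain \<sigma> where s: "\<sigma> \<in> New" "f \<subseteq> \<sigma>" "f \<noteq> {}" unfolding gen_iff by blast
          show ?thesis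
          proof (cases "\<sigma> \<in> K")
            case True then show ?thesis using S_closed s unfolding K_def by blast
          next
            case False
            then have "f \<in> gen NN" using s unfolding NN_def gen_iff by blast
            then show ?thesis by blast
          qed
        qed simp
      qed
      show "K \<union> gen NN \<subseteq> K \<union> gen New" unfolding NN_def gen_def by blast
    qed
    finally show ?thesis .
  qed
  obtain vs where vs: "distinct vs" "set vs = W" "finite W" "card W \<ge> d"
    "\<And>i. d + 1 \<le> i \<Longrightarrow> i \<le> length vs \<Longrightarrow> is_simplex (link (induced K (set (take i vs))) (vs ! (i - 1))) (d - 1)"
    using IH unfolding is_dtree_def K_def W_def by blast
  have Kne: "\<And>f. f \<in> K \<Longrightarrow> f \<noteq> {}" unfolding K_def using S_nonempty by blast
  have K'ne: "\<And>f. f \<in> K' \<Longrightarrow> f \<noteq> {}" unfolding K'_def using S_nonempty by blast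
  have NNY: "NN \<subseteq> Y" unfolding NN_def New_def by blast
  have NNfin: "finite NN" using NNY Y(1) finite_subset by blast
  have rem: "S (Y - {\<sigma>}) d \<tau> j = K" if "\<sigma> \<in> NN" for \<sigma>
  proof -
    have "\<sigma> \<noteq> {}" using Y(2)[of \<sigma>] that NNY by auto
    moreover have "\<sigma> \<notin> K" using that unfolding NN_def by blast
    ultimately show ?thesis unfolding K_def by (rule S_remove)
  qed
  have notW: "\<not> \<sigma> \<subseteq> W" if "\<sigma> \<in> NN" for \<sigma>
  proof
    assume "\<sigma> \<subseteq> W"
    moreover have "W \<subseteq> \<Union>(S (Y - {\<sigma>}) d \<tau> m)"
      using rem[OF that] S_mono_level[of j m "Y - {\<sigma>}" d \<tau>] jm unfolding W_def by auto
    ultimately show False using N[of \<sigma>] that NNY by blast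
  qed
  have struct: "\<exists>v. \<sigma> - W = {v} \<and> \<sigma> \<inter> W \<in> K" if s: "\<sigma> \<in> NN" for \<sigma>
  proof -
    obtain \<eta> where \<eta>: "\<eta> \<in> K" "card \<eta> = d" "\<eta> \<subseteq> \<sigma>" using s unfolding NN_def New_def by blast
    have fs: "finite \<sigma>" "card \<sigma> = Suc d" using Y(2)[of \<sigma>] s NNY by auto
    have \<eta>W: "\<eta> \<subseteq> \<sigma> \<inter> W" using \<eta> unfolding W_def by blast
    have c1: "card \<eta> \<le> card (\<sigma> \<inter> W)" using \<eta>W fs by (simp add: card_mono)
    have c2: "card (\<sigma> - W) + card (\<sigma> \<inter> W) = card \<sigma>"
      using fs card_Diff_subset_Int[of \<sigma> W] by (metis Int_commute card_Int_Diff fs(1) add.commute)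
    have ne: "\<sigma> - W \<noteq> {}" using notW[OF s] by blast
    have "card (\<sigma> - W) \<noteq> 0" using ne fs by simp
    then have "card (\<sigma> - W) = 1" "card (\<sigma> \<inter> W) = d" using c1 c2 fs \<eta> by linarith+
    then have "\<exists>v. \<sigma> - W = {v}" using card_1_singletonE by blast
    moreover have "\<eta> = \<sigma> \<inter> W" using card_subset_eq[of "\<sigma> \<inter> W" \<eta>] \<eta>W fs \<open>card (\<sigma> \<inter> W) = d\<close> \<eta> by simp
    ultimately show ?thesis using \<eta> by auto
  qed
  define nv where "nv \<sigma> = the_elem (\<sigma> - W)" for \<sigma>
  have nv: "\<sigma> - W = {nv \<sigma>}" "\<sigma> \<inter> W \<in> K" "nv \<sigma> \<in> \<sigma>" "nv \<sigma> \<notin> W" "\<sigma> - {nv \<sigma>} = \<sigma> \<inter> W"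
    if "\<sigma> \<in> NN" for \<sigma>
  proof -
    from struct[OF that] obtain v where v: "\<sigma> - W = {v}" "\<sigma> \<inter> W \<in> K" by blast
    then have "nv \<sigma> = v" unfolding nv_def by simp
    then show "\<sigma> - W = {nv \<sigma>}" "\<sigma> \<inter> W \<in> K" "nv \<sigma> \<in> \<sigma>" "nv \<sigma> \<notin> W" "\<sigma> - {nv \<sigma>} = \<sigma> \<inter> W"
      using v by blast+
  qed
  have inj: "inj_on nv NN"
  proof (rule inj_onI)
    fix \<sigma> \<sigma>' assume s: "\<sigma> \<in> NN" "\<sigma>' \<in> NN" "nv \<sigma> = nv \<sigma>'"
    show "\<sigma> = \<sigma>'"
    proof (rule ccontr)
      assume ne: "\<sigma> \<noteq> \<sigma>'"
      have "\<sigma>' \<in> S (Y - {\<sigma>}) d \<tau> (Suc j)"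
      proof -
        obtain \<eta> where \<eta>: "\<eta> \<in> K" "card \<eta> = d" "\<eta> \<subseteq> \<sigma>'" using s(2) unfolding NN_def New_def by blast
        have "\<sigma>' \<in> Y - {\<sigma>}" using s(2) NNY ne by auto
        moreover have "\<sigma>' \<noteq> {}" using nv(3)[OF s(2)] by blast
        ultimately have "\<sigma>' \<in> gen {\<rho> \<in> Y - {\<sigma>}. \<exists>\<eta>\<in>S (Y - {\<sigma>}) d \<tau> j. card \<eta> = d \<and> \<eta> \<subseteq> \<rho>}"
          using \<eta> rem[OF s(1)] unfolding gen_iff by blast
        then show ?thesis by simp
      qed
      then have "nv \<sigma> \<in> \<Union>(S (Y - {\<sigma>}) d \<tau> (Suc j))" using nv(3)[OF s(2)] s(3) by (metis UnionI)
      moreover have "W \<subseteq> \<Union>(S (Y - {\<sigma>}) d \<tau> (Suc j))"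
        using rem[OF s(1)] S_Suc_mono[of "Y - {\<sigma>}" d \<tau> j] unfolding W_def by auto
      moreover have "\<sigma> \<subseteq> W \<union> {nv \<sigma>}" using nv(1)[OF s(1)] by blast
      moreover have "\<And>U. nv \<sigma> \<in> U \<Longrightarrow> W \<subseteq> U \<Longrightarrow> \<sigma> \<subseteq> W \<union> {nv \<sigma>} \<Longrightarrow> \<sigma> \<subseteq> U" by blast
      ultimately have "\<sigma> \<subseteq> \<Union>(S (Y - {\<sigma>}) d \<tau> (Suc j))" by blast
      moreover have "S (Y - {\<sigma>}) d \<tau> (Suc j) \<subseteq> S (Y - {\<sigma>}) d \<tau> m" using S_mono_level jm by blast
      ultimately show False using N[of \<sigma>] s(1) NNY by blast
    qed
  qed
  have inside: "f \<subseteq> \<sigma>" if "f \<in> K'" "\<sigma> \<in> NN" "nv \<sigma> \<in> f" for f \<sigma>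
  proof -
    from that(1) K'eq consider "f \<in> K" | "f \<in> gen NN" by blast
    then show ?thesis
    proof cases
      case 1 then have "f \<subseteq> W" unfolding W_def by blast
      then show ?thesis using nv(4)[OF that(2)] that(3) by blast
    next
      case 2
      then obtain \<sigma>' where s': "\<sigma>' \<in> NN" "f \<subseteq> \<sigma>'" unfolding gen_iff by blast
      then have "nv \<sigma> \<in> \<sigma>' - W" using that(3) nv(4)[OF that(2)] by blast
      then have "nv \<sigma>' = nv \<sigma>" using nv(1)[OF s'(1)] by simp
      then have "\<sigma>' = \<sigma>" using inj s'(1) that(2) inj_on_eq_iff by metis
      then show ?thesis using s' by simp
    qed
  qed
  have old: "induced K' Q = induced K Q" if "Q \<subseteq> W" for Q
  proof
    show "induced K Q \<subseteq> induced K' Q" unfolding induced_def K'eq by blast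
    show "induced K' Q \<subseteq> induced K Q"
    proof
      fix f assume f: "f \<in> induced K' Q"
      then have fK': "f \<in> K'" "f \<subseteq> Q" unfolding induced_def by auto
      have "f \<in> K"
      proof (cases "f \<in> K")
        case False
        then have "f \<in> gen NN" using fK' K'eq by blast
        then obtain \<sigma> where s: "\<sigma> \<in> NN" "f \<subseteq> \<sigma>" "f \<noteq> {}" unfolding gen_iff by blast
        then have "f \<subseteq> \<sigma> \<inter> W" using fK' that by blast
        then show ?thesis using S_closed nv(2)[OF s(1)] s(3) unfolding K_def by blast
      qed
      then show "f \<in> induced K Q" using fK' unfolding induced_def by blast
    qed
  qed
  define ws where "ws = sorted_list_of_set (nv ` NN)"
  have ws: "distinct ws" "set ws = nv ` NN" unfolding ws_def using NNfin by auto
  define vs' where "vs' = vs @ ws"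
  have UK': "\<Union>K' = W \<union> nv ` NN"
  proof -
    have "\<Union>K' = W \<union> \<Union>NN" unfolding K'eq W_def
      using Union_gen[of NN] nv(3) by auto
    also have "W \<union> \<Union>NN = W \<union> nv ` NN"
    proof
      show "W \<union> \<Union>NN \<subseteq> W \<union> nv ` NN"
      proof
        fix x assume "x \<in> W \<union> \<Union>NN"
        then consider "x \<in> W" | \<sigma> where "\<sigma> \<in> NN" "x \<in> \<sigma>" by blast
        then show "x \<in> W \<union> nv ` NN"
        proof cases
          case (2 \<sigma>)
          show ?thesis
          proof (cases "x \<in> W")
            case False
            then have "x \<in> \<sigma> - W" using 2 by blast
            then have "x = nv \<sigma>" using nv(1)[OF 2(1)] by simp
            then show ?thesis using 2 by blast
          qed simp
        qed simp
      qed
      show "W \<union> nv ` NN \<subseteq> W \<union> \<Union>NN" using nv(3) by blast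
    qed
    finally show ?thesis .
  qed
  have dist: "distinct vs'" unfolding vs'_def using vs(1) ws nv(4) vs(2) by auto
  have setvs': "set vs' = \<Union>K'" unfolding vs'_def using vs(2) ws(2) UK' by auto
  have fin': "finite (\<Union>K')" using UK' vs(3) NNfin by simp
  have card': "card (\<Union>K') \<ge> d" using vs(4) card_mono[OF fin', of W] UK' by auto
  have links: "is_simplex (link (induced K' (set (take i vs'))) (vs' ! (i - 1))) (d - 1)"
    if i: "d + 1 \<le> i" "i \<le> length vs'" for i
  proof (cases "i \<le> length vs")
    case True
    have "take i vs' = take i vs" unfolding vs'_def using True by simp
    moreover have "vs' ! (i - 1) = vs ! (i - 1)" proof -
      have "i - 1 < length vs" using True i(1) d by simp
      then show ?thesis unfolding vs'_def by (simp add: nth_append)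
    qed
    moreover have sW: "set (take i vs) \<subseteq> W" using vs(2) set_take_subset by metis
    ultimately show ?thesis using old[OF sW] vs(5)[OF i(1) True] by (simp only:)
  next
    case False
    define t where "t = i - length vs"
    have t: "1 \<le> t" "t \<le> length ws" using False i unfolding t_def vs'_def by auto
    define v where "v = ws ! (t - 1)"
    have ni: "\<not> i - 1 < length vs" using False by simp
    have "i - 1 - length vs = t - 1" unfolding t_def by simp
    then have vv: "vs' ! (i - 1) = v" unfolding v_def vs'_def using ni by (simp add: nth_append)
    have tk: "set (take i vs') = W \<union> set (take t ws)"
      unfolding vs'_def t_def using False vs(2) by simp
    have tl: "t - 1 < length (take t ws)" using t by simp
    have "take t ws ! (t - 1) = v" unfolding v_def using t by simp
    then have vin: "v \<in> set (take t ws)" using nth_mem[OF tl] by simp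
    have "v \<in> nv ` NN" using vin ws(2) set_take_subset by (metis subsetD)
    then obtain \<sigma> where s: "\<sigma> \<in> NN" "v = nv \<sigma>" by blast
    define Q where "Q = W \<union> set (take t ws)"
    have vQ: "v \<in> Q" using vin unfolding Q_def by blast
    have "link (induced K' Q) v = gen {\<sigma> \<inter> W}"
    proof
      show "link (induced K' Q) v \<subseteq> gen {\<sigma> \<inter> W}"
      proof
        fix g assume "g \<in> link (induced K' Q) v"
        then have g: "g \<in> K'" "v \<notin> g" "insert v g \<in> K'" unfolding link_def induced_def by auto
        have "insert v g \<subseteq> \<sigma>" using inside[OF g(3) s(1)] s(2) by blast
        then have "g \<subseteq> \<sigma> \<inter> W" using nv(5)[OF s(1)] g(2) s(2) by blast
        then show "g \<in> gen {\<sigma> \<inter> W}" using K'ne[OF g(1)] unfolding gen_iff by blast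
      qed
      show "gen {\<sigma> \<inter> W} \<subseteq> link (induced K' Q) v"
      proof
        fix g assume "g \<in> gen {\<sigma> \<inter> W}"
        then have g: "g \<noteq> {}" "g \<subseteq> \<sigma> \<inter> W" unfolding gen_iff by auto
        have "g \<in> gen NN" using g s(1) unfolding gen_iff by blast
        moreover have "insert v g \<in> gen NN" using g s nv(3)[OF s(1)] unfolding gen_iff by blast
        moreover have "v \<notin> g" using g nv(4)[OF s(1)] s(2) by blast
        moreover have "g \<subseteq> Q" "insert v g \<subseteq> Q" using g vQ unfolding Q_def by auto
        ultimately have "g \<in> K'" "insert v g \<in> K'" "v \<notin> g" "g \<subseteq> Q" "insert v g \<subseteq> Q"
          unfolding K'eq by blast+
        then show "g \<in> link (induced K' Q) v" unfolding link_def induced_def by simp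
      qed
    qed
    moreover have "card (\<sigma> \<inter> W) = Suc (d - 1)"
    proof -
      have fs: "finite \<sigma>" "card \<sigma> = Suc d" using Y(2)[of \<sigma>] s NNY by auto
      have "card (\<sigma> - {nv \<sigma>}) = d" using fs nv(3)[OF s(1)] by simp
      then show ?thesis using nv(5)[OF s(1)] d by simp
    qed
    moreover have "finite (\<sigma> \<inter> W)" using vs(3) by simp
    ultimately have "\<exists>s. finite s \<and> card s = Suc (d - 1) \<and> link (induced K' Q) v = gen {s}" by blast
    then show ?thesis unfolding is_simplex_def tk vv Q_def by simp
  qed
  have "\<exists>vs. distinct vs \<and> set vs = \<Union>K' \<and>
        (\<forall>i. d + 1 \<le> i \<and> i \<le> length vs \<longrightarrow> is_simplex (link (induced K' (set (take i vs))) (vs ! (i - 1))) (d - 1))"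
    using dist setvs' links by blast
  then show ?thesis unfolding is_dtree_def K'_def[symmetric] using fin' card' by simp
qed

lemma tree_lemma:
  assumes d: "d \<ge> 1" and \<tau>: "finite \<tau>" "card \<tau> = d"
    and Y: "finite Y" "\<And>\<sigma>. \<sigma> \<in> Y \<Longrightarrow> finite \<sigma> \<and> card \<sigma> = Suc d"
    and N: "\<And>\<sigma>. \<sigma> \<in> Y \<Longrightarrow> \<not> \<sigma> \<subseteq> \<Union>(S (Y - {\<sigma>}) d \<tau> m)"
  shows "j \<le> m \<Longrightarrow> is_dtree d (S Y d \<tau> j)"
proof (induction j)
  case 0
  have ne: "\<tau> \<noteq> {}" using \<tau> d by auto
  have U: "\<Union>(gen {\<tau>}) = \<tau>" using Union_gen[of "{\<tau>}"] ne by auto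
  show ?case unfolding is_dtree_def
    using U \<tau> by (auto intro!: exI[of _ "sorted_list_of_set \<tau>"])
next
  case (Suc j)
  then show ?case using tree_step[OF d Y N Suc.prems] by simp
qed



fun Bd :: "nat \<Rightarrow> nat \<Rightarrow> real \<Rightarrow> real" where
  "Bd d 0 K = real d"
| "Bd d (Suc j) K = Bd d j K + real (Suc d) * Bd d j K ^ d * K"

lemma faces_sub: "\<sigma> \<in> faces n j \<Longrightarrow> \<sigma> \<subseteq> {0..<n}" unfolding faces_def by auto
lemma faces_card: "\<sigma> \<in> faces n j \<Longrightarrow> card \<sigma> = Suc j \<and> finite \<sigma>"
  unfolding faces_def by (auto intro: finite_subset)
lemma finite_faces: "finite (faces n j)"
  unfolding faces_def by (rule finite_subset[of _ "Pow {0..<n}"]) auto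

lemma S_sub: "\<tau> \<subseteq> {0..<n} \<Longrightarrow> Y \<subseteq> faces n d \<Longrightarrow> \<Union>(S Y d \<tau> j) \<subseteq> {0..<n}"
  using S_Union[of Y d \<tau> j] faces_sub by blast

lemma vert_bound:
  assumes \<tau>: "\<tau> \<subseteq> {0..<n}" "card \<tau> = d" and Y: "Y \<subseteq> faces n d" and K: "0 \<le> K"
    and d: "d \<ge> 1"
    and deg: "\<And>\<eta>. \<eta> \<in> faces n (d - 1) \<Longrightarrow> real (card {\<sigma>\<in>Y. \<eta> \<subseteq> \<sigma>}) \<le> K"
  shows "real (card (\<Union>(S Y d \<tau> j))) \<le> Bd d j K"
proof (induction j)
  case 0
  have "\<tau> \<noteq> {}" using \<tau> d by auto
  then have "\<Union>(gen {\<tau>}) = \<tau>" using Union_gen[of "{\<tau>}"] by auto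
  then show ?case using \<tau> by simp
next
  case (Suc j)
  define W where "W = \<Union>(S Y d \<tau> j)"
  define New where "New = {\<sigma> \<in> Y. \<exists>\<eta>\<in>S Y d \<tau> j. card \<eta> = d \<and> \<eta> \<subseteq> \<sigma>}"
  define H where "H = {\<eta>. \<eta> \<subseteq> W \<and> card \<eta> = d}"
  have Wn: "W \<subseteq> {0..<n}" unfolding W_def using S_sub[OF \<tau>(1) Y] .
  have Wfin: "finite W" using Wn finite_subset by blast
  have Yfin: "finite Y" using Y finite_faces finite_subset by blast
  have Ycard: "\<And>\<sigma>. \<sigma> \<in> Y \<Longrightarrow> card \<sigma> = Suc d \<and> finite \<sigma>" using Y faces_card by blast
  have Newne: "\<And>\<sigma>. \<sigma> \<in> New \<Longrightarrow> \<sigma> \<noteq> {}" using Ycard unfolding New_def by fastforce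
  have U: "\<Union>(S Y d \<tau> (Suc j)) = W \<union> \<Union>New"
    using Union_gen[of New, OF Newne] unfolding W_def New_def by auto
  have HP: "H \<subseteq> Pow W" unfolding H_def by auto
  have Hfin: "finite H" using finite_subset[OF HP] Wfin by simp
  have cH: "card H \<le> card W ^ d"
  proof -
    have "card W choose d \<le> card W ^ d"
    proof (cases "d \<le> card W")
      case True then show ?thesis by (rule binomial_le_pow)
    next
      case False then show ?thesis by (simp add: binomial_eq_0)
    qed
    then show ?thesis unfolding H_def n_subsets[OF Wfin] .
  qed
  have NewH: "New \<subseteq> (\<Union>\<eta>\<in>H. {\<sigma>\<in>Y. \<eta> \<subseteq> \<sigma>})"
    unfolding New_def H_def W_def by blast
  have "card New \<le> card (\<Union>\<eta>\<in>H. {\<sigma>\<in>Y. \<eta> \<subseteq> \<sigma>})"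
  proof -
    have "(\<Union>\<eta>\<in>H. {\<sigma>\<in>Y. \<eta> \<subseteq> \<sigma>}) \<subseteq> Y" by blast
    from finite_subset[OF this Yfin] show ?thesis using card_mono NewH by blast
  qed
  also have "\<dots> \<le> (\<Sum>\<eta>\<in>H. card {\<sigma>\<in>Y. \<eta> \<subseteq> \<sigma>})" by (rule card_UN_le[OF Hfin])
  finally have cN1: "real (card New) \<le> (\<Sum>\<eta>\<in>H. real (card {\<sigma>\<in>Y. \<eta> \<subseteq> \<sigma>}))"
    by (metis of_nat_le_iff of_nat_sum)
  have "(\<Sum>\<eta>\<in>H. real (card {\<sigma>\<in>Y. \<eta> \<subseteq> \<sigma>})) \<le> (\<Sum>\<eta>\<in>H. K)"
  proof (rule sum_mono)
    fix \<eta> assume "\<eta> \<in> H"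
    then have "\<eta> \<in> faces n (d - 1)" unfolding H_def faces_def using Wn d by auto
    then show "real (card {\<sigma>\<in>Y. \<eta> \<subseteq> \<sigma>}) \<le> K" by (rule deg)
  qed
  then have cN: "real (card New) \<le> real (card W) ^ d * K"
    using cN1 cH K by (simp) (smt (verit, ccfv_SIG) mult_right_mono of_nat_le_iff of_nat_power)
  have "card (\<Union>New) \<le> sum card New" by (rule card_Union_le_sum_card)
  also have "sum card New = Suc d * card New" using Ycard unfolding New_def by simp
  finally have cU: "real (card (\<Union>New)) \<le> real (Suc d) * (real (card W) ^ d * K)"
    using cN by (smt (verit, ccfv_SIG) mult_left_mono of_nat_0_le_iff of_nat_le_iff of_nat_mult)
  have "card (W \<union> \<Union>New) \<le> card W + card (\<Union>New)" by (rule card_Un_le)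
  then have "real (card (\<Union>(S Y d \<tau> (Suc j)))) \<le> real (card W) + real (Suc d) * (real (card W) ^ d * K)"
    unfolding U using cU by linarith
  also have "\<dots> \<le> Bd d j K + real (Suc d) * (Bd d j K ^ d * K)"
  proof -
    have IH: "real (card W) \<le> Bd d j K" using Suc unfolding W_def .
    have "real (card W) ^ d \<le> Bd d j K ^ d" by (rule power_mono[OF IH]) simp
    then have "real (card W) ^ d * K \<le> Bd d j K ^ d * K" using K by (rule mult_right_mono)
    then show ?thesis using IH by (smt (verit) mult_left_mono of_nat_0_le_iff)
  qed
  finally show ?case by (simp add: mult.assoc)
qed



lemma star_card:
  assumes \<eta>: "\<eta> \<in> faces n (d - 1)" and d: "d \<ge> 1"
  shows "card {\<sigma>\<in>faces n d. \<eta> \<subseteq> \<sigma>} \<le> n"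
proof -
  have c\<eta>: "card \<eta> = d" "finite \<eta>" using faces_card[OF \<eta>] d by auto
  have "{\<sigma>\<in>faces n d. \<eta> \<subseteq> \<sigma>} \<subseteq> (\<lambda>v. insert v \<eta>) ` {0..<n}"
  proof
    fix \<sigma> assume s: "\<sigma> \<in> {\<sigma>\<in>faces n d. \<eta> \<subseteq> \<sigma>}"
    then have cs: "card \<sigma> = Suc d" "finite \<sigma>" "\<eta> \<subseteq> \<sigma>" "\<sigma> \<subseteq> {0..<n}"
      using faces_card[of \<sigma> n d] faces_sub[of \<sigma> n d] by auto
    have "\<sigma> - \<eta> \<noteq> {}" using cs c\<eta> by auto
    then obtain v where v: "v \<in> \<sigma>" "v \<notin> \<eta>" by blast
    have sub: "insert v \<eta> \<subseteq> \<sigma>" using v cs by auto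
    have "card (insert v \<eta>) = card \<sigma>" using c\<eta> v cs by simp
    then have "insert v \<eta> = \<sigma>" using card_subset_eq[OF cs(2) sub] by simp
    then show "\<sigma> \<in> (\<lambda>v. insert v \<eta>) ` {0..<n}" using v cs by auto
  qed
  then have "card {\<sigma>\<in>faces n d. \<eta> \<subseteq> \<sigma>} \<le> card ((\<lambda>v. insert v \<eta>) ` {0..<n})"
    by (rule card_mono[rotated]) simp
  also have "\<dots> \<le> card {0..<n}" by (rule card_image_le) simp
  finally show ?thesis by simp
qed

lemma deg_tail:
  assumes \<eta>: "\<eta> \<in> faces n (d - 1)" and d: "d \<ge> 1" and p: "0 \<le> p" "p \<le> 1"
  shows "P (faces n d) p (\<lambda>Y. m \<le> card {\<sigma>\<in>Y. \<eta> \<subseteq> \<sigma>}) \<le> real n ^ m / fact m * p ^ m"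
proof -
  define Star where "Star = {\<sigma>\<in>faces n d. \<eta> \<subseteq> \<sigma>}"
  define X where "X = {A. A \<subseteq> Star \<and> card A = m}"
  have Sfin: "finite Star" unfolding Star_def using finite_faces by simp
  have "X \<subseteq> Pow Star" unfolding X_def by auto
  then have Xfin: "finite X" using finite_subset Sfin by blast
  have "P (faces n d) p (\<lambda>Y. m \<le> card {\<sigma>\<in>Y. \<eta> \<subseteq> \<sigma>}) \<le> P (faces n d) p (\<lambda>Y. \<exists>A\<in>X. A \<subseteq> Y)"
  proof (rule P_mono[OF finite_faces p])
    fix Y assume Y: "Y \<subseteq> faces n d" and m: "m \<le> card {\<sigma>\<in>Y. \<eta> \<subseteq> \<sigma>}"
    obtain A where A: "A \<subseteq> {\<sigma>\<in>Y. \<eta> \<subseteq> \<sigma>}" "card A = m" using obtain_subset_with_card_n[OF m] by blast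
    then have "A \<in> X" unfolding X_def Star_def using Y by auto
    then show "\<exists>A\<in>X. A \<subseteq> Y" using A by blast
  qed
  also have "\<dots> \<le> (\<Sum>A\<in>X. P (faces n d) p (\<lambda>Y. A \<subseteq> Y))"
    by (rule P_union_bound[OF finite_faces Xfin p])
  also have "\<dots> = (\<Sum>A\<in>X. p ^ m)"
  proof (rule sum.cong[OF refl])
    fix A assume "A \<in> X"
    then have "A \<subseteq> Star" "card A = m" unfolding X_def by auto
    moreover have "finite A" using \<open>A \<subseteq> Star\<close> Sfin finite_subset by blast
    ultimately show "P (faces n d) p (\<lambda>Y. A \<subseteq> Y) = p ^ m"
      using P_subset[of A "faces n d" p] finite_faces unfolding Star_def by auto
  qed
  also have "\<dots> = real (card Star choose m) * p ^ m"
    using n_subsets[OF Sfin, of m] unfolding X_def by simp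
  also have "\<dots> \<le> real n ^ m / fact m * p ^ m"
  proof (rule mult_right_mono[OF _ zero_le_power[OF p(1)]])
    have "(card Star choose m) * fact m \<le> card Star ^ m" by (rule binomial_fact_pow)
    also have "\<dots> \<le> n ^ m" using star_card[OF \<eta> d] unfolding Star_def by (simp add: power_mono)
    finally have "real (card Star choose m) * fact m \<le> real n ^ m"
      by (metis of_nat_fact of_nat_le_iff of_nat_mult of_nat_power)
    then show "real (card Star choose m) \<le> real n ^ m / fact m"
      by (simp add: field_simps)
  qed
  finally show ?thesis .
qed

lemma card_faces: "card (faces n j) \<le> n ^ Suc j"
proof -
  have "faces n j = {\<sigma>. \<sigma> \<subseteq> {0..<n} \<and> card \<sigma> = Suc j}" unfolding faces_def ..
  then have "card (faces n j) = n choose Suc j" using n_subsets[of "{0..<n}" "Suc j"] by simp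
  moreover have "(n choose Suc j) * fact (Suc j) \<le> n ^ Suc j" by (rule binomial_fact_pow)
  moreover have "n choose Suc j \<le> (n choose Suc j) * fact (Suc j)"
    using mult_le_mono2[OF fact_ge_1[of "Suc j"], of "n choose Suc j"] by simp
  ultimately show ?thesis by linarith
qed

lemma notD_bound:
  assumes d: "d \<ge> 1" and p: "0 \<le> p" "p \<le> 1" and n: "n \<ge> 1"
  defines "m \<equiv> nat \<lfloor>ln (real n)\<rfloor> + 1"
  shows "P (faces n d) p (\<lambda>Y. \<not> (\<forall>\<eta>\<in>faces n (d - 1). real (card {\<sigma>\<in>Y. \<eta> \<subseteq> \<sigma>}) \<le> ln (real n)))
     \<le> real n ^ d * (real n ^ m / fact m * p ^ m)"
proof -
  have "P (faces n d) p (\<lambda>Y. \<not> (\<forall>\<eta>\<in>faces n (d - 1). real (card {\<sigma>\<in>Y. \<eta> \<subseteq> \<sigma>}) \<le> ln (real n)))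
      \<le> P (faces n d) p (\<lambda>Y. \<exists>\<eta>\<in>faces n (d - 1). m \<le> card {\<sigma>\<in>Y. \<eta> \<subseteq> \<sigma>})"
  proof (rule P_mono[OF finite_faces p])
    fix Y assume "\<not> (\<forall>\<eta>\<in>faces n (d - 1). real (card {\<sigma>\<in>Y. \<eta> \<subseteq> \<sigma>}) \<le> ln (real n))"
    then obtain \<eta> where \<eta>: "\<eta> \<in> faces n (d - 1)" "ln (real n) < real (card {\<sigma>\<in>Y. \<eta> \<subseteq> \<sigma>})" by force
    have "ln (real n) \<ge> 0" using n by simp
    then have "real m \<le> real (card {\<sigma>\<in>Y. \<eta> \<subseteq> \<sigma>})" using \<eta>(2) unfolding m_def
      by (smt (verit, best) floor_less_iff of_int_of_nat_eq of_nat_1 of_nat_add of_nat_nat zero_le_floor floor_of_nat)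
    then show "\<exists>\<eta>\<in>faces n (d - 1). m \<le> card {\<sigma>\<in>Y. \<eta> \<subseteq> \<sigma>}" using \<eta>(1) by auto
  qed
  also have "\<dots> \<le> (\<Sum>\<eta>\<in>faces n (d - 1). P (faces n d) p (\<lambda>Y. m \<le> card {\<sigma>\<in>Y. \<eta> \<subseteq> \<sigma>}))"
    by (rule P_union_bound[OF finite_faces finite_faces p])
  also have "\<dots> \<le> (\<Sum>\<eta>\<in>faces n (d - 1). real n ^ m / fact m * p ^ m)"
    by (rule sum_mono, rule deg_tail[OF _ d p])
  also have "\<dots> = real (card (faces n (d - 1))) * (real n ^ m / fact m * p ^ m)" by simp
  also have "\<dots> \<le> real n ^ d * (real n ^ m / fact m * p ^ m)"
  proof (rule mult_right_mono)
    have "card (faces n (d - 1)) \<le> n ^ d" using card_faces[of n "d - 1"] d by simp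
    then show "real (card (faces n (d - 1))) \<le> real n ^ d" by (metis of_nat_le_iff of_nat_power)
  qed (use p in simp)
  finally show ?thesis .
qed



lemma Bd_nonneg: "0 \<le> K \<Longrightarrow> 0 \<le> Bd d j K"
  by (induction j) auto

lemma bad_bound:
  assumes d: "d \<ge> 1" and \<tau>: "\<tau> \<in> faces n (d - 1)" and p: "0 \<le> p" "p \<le> 1" and n: "n \<ge> 1"
  shows "P (faces n d) p (\<lambda>Y. (\<forall>\<eta>\<in>faces n (d - 1). real (card {\<sigma>\<in>Y. \<eta> \<subseteq> \<sigma>}) \<le> ln (real n))
              \<and> \<not> is_dtree d (S Y d \<tau> m))
     \<le> p * Bd d m (ln (real n) + 1) ^ Suc d"
proof -
  define F where "F = faces n d"
  define D where "D = (\<lambda>Y. \<forall>\<eta>\<in>faces n (d - 1). real (card {\<sigma>\<in>Y. \<eta> \<subseteq> \<sigma>}) \<le> ln (real n))"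
  define \<Psi> where "\<Psi> = (\<lambda>\<sigma> Z. D Z \<and> \<sigma> \<subseteq> \<Union>(S Z d \<tau> m))"
  define B where "B = Bd d m (ln (real n) + 1) ^ Suc d"
  have Ffin: "finite F" unfolding F_def by (rule finite_faces)
  have \<tau>f: "finite \<tau>" "card \<tau> = d" "\<tau> \<subseteq> {0..<n}" using faces_card[OF \<tau>] faces_sub[OF \<tau>] d by auto
  have lnn: "0 \<le> ln (real n)" using n by simp
  have B0: "0 \<le> B" unfolding B_def using Bd_nonneg lnn by simp
  have Dmono: "D (Y - {\<sigma>})" if "D Y" "finite Y" for Y \<sigma>
    unfolding D_def
  proof
    fix \<eta> assume \<eta>: "\<eta> \<in> faces n (d - 1)"
    have "card {\<rho>\<in>Y - {\<sigma>}. \<eta> \<subseteq> \<rho>} \<le> card {\<rho>\<in>Y. \<eta> \<subseteq> \<rho>}"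
    proof (rule card_mono)
      show "finite {\<rho>\<in>Y. \<eta> \<subseteq> \<rho>}" using that(2) by simp
    qed blast
    then show "real (card {\<rho>\<in>Y - {\<sigma>}. \<eta> \<subseteq> \<rho>}) \<le> ln (real n)"
      using that(1) \<eta> unfolding D_def by (meson of_nat_le_iff order_trans)
  qed
  have "P F p (\<lambda>Y. D Y \<and> \<not> is_dtree d (S Y d \<tau> m)) \<le> P F p (\<lambda>Y. \<exists>\<sigma>\<in>F. \<sigma> \<in> Y \<and> \<Psi> \<sigma> (Y - {\<sigma>}))"
  proof (rule P_mono[OF Ffin p])
    fix Y assume Y: "Y \<subseteq> F" and DT: "D Y \<and> \<not> is_dtree d (S Y d \<tau> m)"
    have Yfin: "finite Y" using Y Ffin finite_subset by blast
    have Yc: "\<And>\<sigma>. \<sigma> \<in> Y \<Longrightarrow> finite \<sigma> \<and> card \<sigma> = Suc d" using Y faces_card unfolding F_def by blast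
    have "\<exists>\<sigma>\<in>Y. \<sigma> \<subseteq> \<Union>(S (Y - {\<sigma>}) d \<tau> m)"
    proof (rule ccontr)
      assume "\<not> ?thesis"
      then have "is_dtree d (S Y d \<tau> m)" using tree_lemma[OF d \<tau>f(1,2) Yfin Yc, of m m] by blast
      then show False using DT by blast
    qed
    then obtain \<sigma> where "\<sigma> \<in> Y" "\<sigma> \<subseteq> \<Union>(S (Y - {\<sigma>}) d \<tau> m)" by blast
    moreover have "D (Y - {\<sigma>})" using Dmono DT Yfin by blast
    ultimately show "\<exists>\<sigma>\<in>F. \<sigma> \<in> Y \<and> \<Psi> \<sigma> (Y - {\<sigma>})" using Y unfolding \<Psi>_def by blast
  qed
  also have "\<dots> \<le> (\<Sum>\<sigma>\<in>F. P F p (\<lambda>Y. \<sigma> \<in> Y \<and> \<Psi> \<sigma> (Y - {\<sigma>})))"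
    by (rule P_union_bound[OF Ffin Ffin p])
  also have "\<dots> = (\<Sum>\<sigma>\<in>F. p * P F p (\<lambda>Y. \<Psi> \<sigma> (Y - {\<sigma>})))"
    by (rule sum.cong[OF refl]) (rule P_point[OF Ffin])
  also have "\<dots> = p * (\<Sum>\<sigma>\<in>F. P F p (\<lambda>Y. \<Psi> \<sigma> (Y - {\<sigma>})))" by (simp add: sum_distrib_left)
  also have "\<dots> \<le> p * B"
  proof (rule mult_left_mono[OF _ p(1)])
    show "(\<Sum>\<sigma>\<in>F. P F p (\<lambda>Y. \<Psi> \<sigma> (Y - {\<sigma>}))) \<le> B"
    proof (rule P_count[OF Ffin p _ B0])
      fix Y assume Y: "Y \<subseteq> F"
      show "real (card {\<sigma>\<in>F. \<Psi> \<sigma> (Y - {\<sigma>})}) \<le> B"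
      proof (cases "{\<sigma>\<in>F. \<Psi> \<sigma> (Y - {\<sigma>})} = {}")
        case True show ?thesis unfolding True using B0 by simp
      next
        case False
        then obtain \<sigma>0 where s0: "\<sigma>0 \<in> F" "D (Y - {\<sigma>0})" unfolding \<Psi>_def by blast
        have Yfin: "finite Y" using Y Ffin finite_subset by blast
        define V where "V = \<Union>(S Y d \<tau> m)"
        have Vn: "V \<subseteq> {0..<n}" unfolding V_def using S_sub[OF \<tau>f(3)] Y unfolding F_def by blast
        have Vfin: "finite V" using Vn finite_subset by blast
        have deg: "real (card {\<sigma>\<in>Y. \<eta> \<subseteq> \<sigma>}) \<le> ln (real n) + 1" if \<eta>: "\<eta> \<in> faces n (d - 1)" for \<eta>
        proof -
          have f1: "finite {\<sigma>\<in>Y - {\<sigma>0}. \<eta> \<subseteq> \<sigma>}" using Yfin by simp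
          have "{\<sigma>\<in>Y. \<eta> \<subseteq> \<sigma>} \<subseteq> insert \<sigma>0 {\<sigma>\<in>Y - {\<sigma>0}. \<eta> \<subseteq> \<sigma>}" by blast
          then have "card {\<sigma>\<in>Y. \<eta> \<subseteq> \<sigma>} \<le> card (insert \<sigma>0 {\<sigma>\<in>Y - {\<sigma>0}. \<eta> \<subseteq> \<sigma>})"
            by (rule card_mono[OF finite_insert[THEN iffD2, OF f1]])
          also have "\<dots> \<le> Suc (card {\<sigma>\<in>Y - {\<sigma>0}. \<eta> \<subseteq> \<sigma>})" using f1 by (simp add: card_insert_if)
          finally have "real (card {\<sigma>\<in>Y. \<eta> \<subseteq> \<sigma>}) \<le> real (card {\<sigma>\<in>Y - {\<sigma>0}. \<eta> \<subseteq> \<sigma>}) + 1" by simp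
          moreover have "real (card {\<sigma>\<in>Y - {\<sigma>0}. \<eta> \<subseteq> \<sigma>}) \<le> ln (real n)" using s0(2) \<eta> unfolding D_def by blast
          ultimately show ?thesis by linarith
        qed
        have cV: "real (card V) \<le> Bd d m (ln (real n) + 1)"
          unfolding V_def by (rule vert_bound[OF \<tau>f(3,2) _ _ d deg]) (use Y lnn in \<open>auto simp: F_def\<close>)
        have sub: "{\<sigma>\<in>F. \<Psi> \<sigma> (Y - {\<sigma>})} \<subseteq> {\<sigma>. \<sigma> \<subseteq> V \<and> card \<sigma> = Suc d}"
        proof
          fix \<sigma> assume "\<sigma> \<in> {\<sigma>\<in>F. \<Psi> \<sigma> (Y - {\<sigma>})}"
          then have "\<sigma> \<in> F" "\<sigma> \<subseteq> \<Union>(S (Y - {\<sigma>}) d \<tau> m)" unfolding \<Psi>_def by auto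
          moreover have "S (Y - {\<sigma>}) d \<tau> m \<subseteq> S Y d \<tau> m" by (rule S_mono_Y) blast
          ultimately show "\<sigma> \<in> {\<sigma>. \<sigma> \<subseteq> V \<and> card \<sigma> = Suc d}"
            unfolding V_def F_def using faces_card by blast
        qed
        have "card {\<sigma>\<in>F. \<Psi> \<sigma> (Y - {\<sigma>})} \<le> card {\<sigma>. \<sigma> \<subseteq> V \<and> card \<sigma> = Suc d}"
        proof (rule card_mono[OF _ sub])
          have "{\<sigma>. \<sigma> \<subseteq> V \<and> card \<sigma> = Suc d} \<subseteq> Pow V" by blast
          then show "finite {\<sigma>. \<sigma> \<subseteq> V \<and> card \<sigma> = Suc d}" using Vfin finite_subset by blast
        qed
        also have "\<dots> = card V choose Suc d" by (rule n_subsets[OF Vfin])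
        also have "\<dots> \<le> card V ^ Suc d"
        proof (cases "Suc d \<le> card V")
          case True then show ?thesis by (rule binomial_le_pow)
        next
          case False then show ?thesis by (simp add: binomial_eq_0)
        qed
        finally have "real (card {\<sigma>\<in>F. \<Psi> \<sigma> (Y - {\<sigma>})}) \<le> real (card V) ^ Suc d"
          by (metis of_nat_le_iff of_nat_power)
        also have "\<dots> \<le> B" unfolding B_def by (rule power_mono[OF cV]) simp
        finally show ?thesis .
      qed
    qed
  qed
  finally show ?thesis unfolding F_def D_def B_def .
qed



lemma pow_fact_le_exp:
  fixes x :: real assumes "0 \<le> x" shows "x ^ m / fact m \<le> exp x"
proof -
  have s: "(\<lambda>n. x ^ n /\<^sub>R fact n) sums exp x" by (rule exp_converges)
  have "(\<Sum>n\<in>{m}. x ^ n /\<^sub>R fact n) \<le> (\<Sum>n. x ^ n /\<^sub>R fact n)"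
    by (rule sum_le_suminf) (use s assms in \<open>auto simp: sums_iff\<close>)
  then show ?thesis using s by (simp add: sums_iff divide_inverse mult.commute)
qed

lemma Bd_nonneg': "0 \<le> K \<Longrightarrow> 0 \<le> Bd d j K"
  by (induction j) auto

lemma Bd_poly: "\<exists>C e. 0 \<le> C \<and> (\<forall>K\<ge>0. Bd d j K \<le> C * (K + 1) ^ e)"
proof (induction j)
  case 0
  show ?case by (rule exI[of _ "real d"], rule exI[of _ 0]) simp
next
  case (Suc j)
  then obtain C e where C: "0 \<le> C" "\<And>K. K \<ge> 0 \<Longrightarrow> Bd d j K \<le> C * (K + 1) ^ e" by blast
  define e' where "e' = d * e + e + 1"
  have "Bd d (Suc j) K \<le> (C + real (Suc d) * C ^ d) * (K + 1) ^ e'" if K: "K \<ge> 0" for K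
  proof -
    define y where "y = K + 1"
    have y: "1 \<le> y" using K unfolding y_def by simp
    have b0: "0 \<le> Bd d j K" using Bd_nonneg' K .
    have b1: "Bd d j K \<le> C * y ^ e" using C(2)[OF K] unfolding y_def .
    have "y ^ e \<le> y ^ e'" using y unfolding e'_def by (intro power_increasing) auto
    then have t1: "Bd d j K \<le> C * y ^ e'" using b1 C(1) by (meson mult_left_mono order_trans)
    have "Bd d j K ^ d \<le> (C * y ^ e) ^ d" by (rule power_mono[OF b1 b0])
    also have "\<dots> = C ^ d * y ^ (e * d)" by (simp add: power_mult_distrib power_mult)
    finally have p1: "Bd d j K ^ d \<le> C ^ d * y ^ (e * d)" .
    have "K \<le> y" unfolding y_def by simp
    then have "Bd d j K ^ d * K \<le> C ^ d * y ^ (e * d) * y"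
      using p1 K b0 by (meson mult_mono zero_le_power order_trans y zero_le_one)
    also have "\<dots> = C ^ d * y ^ (e * d + 1)" by simp
    also have "\<dots> \<le> C ^ d * y ^ e'"
      using y C(1) unfolding e'_def by (intro mult_left_mono power_increasing) auto
    finally have t2: "Bd d j K ^ d * K \<le> C ^ d * y ^ e'" .
    have "Bd d (Suc j) K = Bd d j K + real (Suc d) * (Bd d j K ^ d * K)" by simp
    also have "\<dots> \<le> C * y ^ e' + real (Suc d) * (C ^ d * y ^ e')"
      using t1 t2 by (intro add_mono mult_left_mono) auto
    also have "\<dots> = (C + real (Suc d) * C ^ d) * (K + 1) ^ e'" unfolding y_def by (simp add: algebra_simps)
    finally show ?thesis .
  qed
  moreover have "0 \<le> C + real (Suc d) * C ^ d" using C(1) by simp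
  ultimately show ?case by blast
qed

lemma lnlim: "filterlim (\<lambda>n. ln (real n)) at_top sequentially"
  by (rule filterlim_compose[OF ln_at_top filterlim_real_sequentially])

lemma ev_ln_ge: "eventually (\<lambda>n. X \<le> ln (real n)) sequentially"
  using lnlim unfolding filterlim_at_top by blast

lemma lim_b:
  assumes c: "c > 0"
  shows "(\<lambda>n. c / real n * Bd d j (ln (real n) + 1) ^ Suc d) \<longlonglongrightarrow> 0"
proof -
  obtain C e where C: "0 \<le> C" "\<And>K. K \<ge> 0 \<Longrightarrow> Bd d j K \<le> C * (K + 1) ^ e" using Bd_poly by blast
  define E where "E = e * Suc d"
  have l2: "filterlim (\<lambda>n. ln (real n) + 2) at_top sequentially"
    using filterlim_tendsto_add_at_top[OF tendsto_const lnlim, of 2] by (simp add: add.commute)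
  have l3: "((\<lambda>n. (ln (real n) + 2) ^ E / exp (ln (real n) + 2)) \<longlongrightarrow> 0) sequentially"
    using filterlim_compose[OF tendsto_power_div_exp_0 l2] by simp
  have h: "((\<lambda>n. (c * C ^ Suc d * exp 2) * ((ln (real n) + 2) ^ E / exp (ln (real n) + 2))) \<longlongrightarrow> 0) sequentially"
    using tendsto_mult[OF tendsto_const l3] by simp
  show ?thesis
  proof (rule tendsto_sandwich[OF _ _ tendsto_const h])
    show "eventually (\<lambda>n. 0 \<le> c / real n * Bd d j (ln (real n) + 1) ^ Suc d) sequentially"
      using eventually_ge_at_top[of 1] by eventually_elim (use c Bd_nonneg' in simp)
    show "eventually (\<lambda>n. c / real n * Bd d j (ln (real n) + 1) ^ Suc d
             \<le> (c * C ^ Suc d * exp 2) * ((ln (real n) + 2) ^ E / exp (ln (real n) + 2))) sequentially"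
      using eventually_ge_at_top[of 1]
    proof eventually_elim
      case (elim n)
      have n: "real n \<ge> 1" using elim by simp
      have L: "0 \<le> ln (real n)" using n by simp
      have b0: "0 \<le> Bd d j (ln (real n) + 1)" using Bd_nonneg' L by simp
      have "Bd d j (ln (real n) + 1) ^ Suc d \<le> (C * (ln (real n) + 2) ^ e) ^ Suc d"
      proof -
        have "Bd d j (ln (real n) + 1) \<le> C * (ln (real n) + 1 + 1) ^ e" using C(2)[of "ln (real n) + 1"] L by simp
        then have C2: "Bd d j (ln (real n) + 1) \<le> C * (ln (real n) + 2) ^ e" by (simp add: add.assoc)
        show ?thesis by (rule power_mono[OF C2 b0])
      qed
      also have "\<dots> = C ^ Suc d * (ln (real n) + 2) ^ E" unfolding E_def power_mult power_mult_distrib ..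
      finally have B: "Bd d j (ln (real n) + 1) ^ Suc d \<le> C ^ Suc d * (ln (real n) + 2) ^ E" .
      have ex: "exp (ln (real n) + 2) = real n * exp 2" using n by (simp add: exp_add)
      have "c / real n * Bd d j (ln (real n) + 1) ^ Suc d \<le> c / real n * (C ^ Suc d * (ln (real n) + 2) ^ E)"
        using B c n by (intro mult_left_mono) auto
      also have "\<dots> = (c * C ^ Suc d * exp 2) * ((ln (real n) + 2) ^ E / exp (ln (real n) + 2))"
        unfolding ex using n by (simp add: field_simps)
      finally show ?case .
    qed
  qed
qed

lemma lim_a:
  assumes c: "c > 0"
  shows "(\<lambda>n. real n ^ d * (real n ^ (nat \<lfloor>ln (real n)\<rfloor> + 1) / fact (nat \<lfloor>ln (real n)\<rfloor> + 1)
             * (c / real n) ^ (nat \<lfloor>ln (real n)\<rfloor> + 1))) \<longlonglongrightarrow> 0"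
proof (rule tendsto_sandwich[OF _ _ tendsto_const lim_inverse_n])
  show "eventually (\<lambda>n. 0 \<le> real n ^ d * (real n ^ (nat \<lfloor>ln (real n)\<rfloor> + 1) / fact (nat \<lfloor>ln (real n)\<rfloor> + 1)
             * (c / real n) ^ (nat \<lfloor>ln (real n)\<rfloor> + 1))) sequentially"
    using c by simp
  show "eventually (\<lambda>n. real n ^ d * (real n ^ (nat \<lfloor>ln (real n)\<rfloor> + 1) / fact (nat \<lfloor>ln (real n)\<rfloor> + 1)
             * (c / real n) ^ (nat \<lfloor>ln (real n)\<rfloor> + 1)) \<le> inverse (real n)) sequentially"
    using eventually_ge_at_top[of 1] ev_ln_ge[of "c * exp (real d + 2)"]
  proof eventually_elim
    case (elim n)
    define L where "L = ln (real n)"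
    define m where "m = nat \<lfloor>L\<rfloor> + 1"
    define M where "M = real m"
    have n: "real n \<ge> 1" using elim by simp
    have L0: "0 \<le> L" unfolding L_def using n by simp
    have LX: "c * exp (real d + 2) \<le> L" using elim unfolding L_def by simp
    have hML: "L \<le> M" unfolding M_def m_def using L0 by linarith
    have M0: "0 < M" unfolding M_def m_def by simp
    have cpos: "0 < c * exp (real d + 2)" using c by simp
    have e1: "real n ^ m * (c / real n) ^ m = c ^ m"
      using n by (simp add: power_mult_distrib[symmetric])
    have "c ^ m / fact m = (c / M) ^ m * (M ^ m / fact m)"
      using M0 by (simp add: power_divide)
    also have "\<dots> \<le> (c / M) ^ m * exp M"
      using pow_fact_le_exp[of M m] M0 c by (intro mult_left_mono) auto
    also have "exp M = exp 1 ^ m" unfolding M_def using exp_of_nat_mult[of m 1] by simp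
    also have "(c / M) ^ m * exp 1 ^ m = (c * exp 1 / M) ^ m" by (simp add: power_mult_distrib power_divide)
    also have "\<dots> \<le> exp (- (real d + 1)) ^ m"
    proof (rule power_mono)
      have "c * exp 1 / M \<le> c * exp 1 / (c * exp (real d + 2))"
        using hML LX cpos c M0 by (intro divide_left_mono) (auto intro: mult_pos_pos)
      also have "\<dots> = exp 1 / exp (real d + 2)" using c by simp
      also have "\<dots> = exp (- (real d + 1))" by (simp add: exp_diff[symmetric])
      finally show "c * exp 1 / M \<le> exp (- (real d + 1))" .
    qed (use c M0 in simp)
    also have "exp (- (real d + 1)) ^ m = exp (M * (- (real d + 1)))"
      unfolding M_def by (rule exp_of_nat_mult[symmetric])
    also have "\<dots> \<le> exp (L * (- (real d + 1)))"
      using hML by (intro exp_mono) (simp add: mult_right_mono_neg)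
    also have "\<dots> = inverse (exp L ^ Suc d)"
    proof -
      have "L * (- (real d + 1)) = - (real (Suc d) * L)" by (simp add: algebra_simps)
      then show ?thesis by (simp only: exp_minus exp_of_nat_mult)
    qed
    also have "exp L = real n" unfolding L_def using n by simp
    finally have cm: "c ^ m / fact m \<le> inverse (real n ^ Suc d)" .
    have "real n ^ d * (real n ^ m / fact m * (c / real n) ^ m) = real n ^ d * (c ^ m / fact m)"
    proof -
      have "real n ^ m / fact m * (c / real n) ^ m = (real n ^ m * (c / real n) ^ m) / fact m" by simp
      then show ?thesis using e1 by simp
    qed
    also have "\<dots> \<le> real n ^ d * inverse (real n ^ Suc d)"
      using cm by (intro mult_left_mono) auto
    also have "\<dots> = inverse (real n)" using n by (simp add: field_simps)
    finally show ?case unfolding m_def L_def .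
  qed
qed



theorem claim1:
  fixes d k :: nat and c :: real and \<tau> :: "nat \<Rightarrow> nat set"
  assumes "d \<ge> 2" and "c > 0"
    and "\<And>n. n \<ge> d \<Longrightarrow> \<tau> n \<in> faces n (d - 1)"
  shows "(\<lambda>n. prob_Yd n d (c / real n)
            (\<lambda>Y. is_dtree d (S Y d (\<tau> n) (Suc k)) \<and>
                 (\<forall>\<eta>\<in>faces n (d - 1). real (card {\<sigma>\<in>Y. \<eta> \<subseteq> \<sigma>}) \<le> ln (real n))))
         \<longlonglongrightarrow> 1"
proof -
  have d1: "d \<ge> 1" using assms(1) by simp
  define a where "a n = real n ^ d * (real n ^ (nat \<lfloor>ln (real n)\<rfloor> + 1) / fact (nat \<lfloor>ln (real n)\<rfloor> + 1)
             * (c / real n) ^ (nat \<lfloor>ln (real n)\<rfloor> + 1))" for n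
  define b where "b n = c / real n * Bd d (Suc k) (ln (real n) + 1) ^ Suc d" for n
  define D where "D n Y = (\<forall>\<eta>\<in>faces n (d - 1). real (card {\<sigma>\<in>Y. \<eta> \<subseteq> \<sigma>}) \<le> ln (real n))" for n Y
  define T where "T n Y = is_dtree d (S Y d (\<tau> n) (Suc k))" for n Y
  have la: "a \<longlonglongrightarrow> 0" unfolding a_def by (rule lim_a[OF assms(2)])
  have lb: "b \<longlonglongrightarrow> 0" unfolding b_def by (rule lim_b[OF assms(2)])
  have low: "(\<lambda>n. 1 - (a n + b n)) \<longlonglongrightarrow> 1"
    using tendsto_diff[OF tendsto_const tendsto_add[OF la lb], of 1] by simp
  have key: "1 - (a n + b n) \<le> P (faces n d) (c / real n) (\<lambda>Y. T n Y \<and> D n Y)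
      \<and> P (faces n d) (c / real n) (\<lambda>Y. T n Y \<and> D n Y) \<le> 1"
    if n: "n \<ge> d" "n \<ge> 1" "real n \<ge> c" for n
  proof -
    define p where "p = c / real n"
    have p: "0 \<le> p" "p \<le> 1" unfolding p_def using n assms(2) by auto
    have Ff: "finite (faces n d)" by (rule finite_faces)
    have eq: "P (faces n d) p (\<lambda>Y. T n Y \<and> D n Y) = 1 - P (faces n d) p (\<lambda>Y. \<not> (T n Y \<and> D n Y))"
      by (rule P_compl[OF Ff])
    have "P (faces n d) p (\<lambda>Y. \<not> (T n Y \<and> D n Y)) \<le> P (faces n d) p (\<lambda>Y. \<not> D n Y \<or> (D n Y \<and> \<not> T n Y))"
      by (rule P_mono[OF Ff p]) blast
    also have "\<dots> \<le> P (faces n d) p (\<lambda>Y. \<not> D n Y) + P (faces n d) p (\<lambda>Y. D n Y \<and> \<not> T n Y)"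
      by (rule P_disj[OF Ff p])
    also have "P (faces n d) p (\<lambda>Y. \<not> D n Y) \<le> a n"
      using notD_bound[OF d1 p n(2)] unfolding a_def D_def p_def by simp
    also have "P (faces n d) p (\<lambda>Y. D n Y \<and> \<not> T n Y) \<le> b n"
      using bad_bound[OF d1 assms(3)[OF n(1)] p n(2), of "Suc k"] unfolding b_def D_def T_def p_def by simp
    finally have up: "P (faces n d) p (\<lambda>Y. \<not> (T n Y \<and> D n Y)) \<le> a n + b n" by simp
    have nn: "0 \<le> P (faces n d) p (\<lambda>Y. \<not> (T n Y \<and> D n Y))" by (rule P_nonneg[OF p])
    show ?thesis using eq up nn unfolding p_def by linarith
  qed
  have ev: "eventually (\<lambda>n. n \<ge> d \<and> n \<ge> 1 \<and> real n \<ge> c) sequentially"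
  proof -
    have "eventually (\<lambda>n. n \<ge> max d (nat \<lceil>c\<rceil>) + 1) sequentially" by simp
    then show ?thesis
    proof eventually_elim
      case (elim n)
      have "c \<le> real (nat \<lceil>c\<rceil>)" by linarith
      then show ?case using elim by auto
    qed
  qed
  show ?thesis
    unfolding prob_Yd_P T_def[symmetric] D_def[symmetric]
  proof (rule tendsto_sandwich[OF _ _ low tendsto_const])
    show "eventually (\<lambda>n. 1 - (a n + b n) \<le> P (faces n d) (c / real n) (\<lambda>Y. T n Y \<and> D n Y)) sequentially"
      using ev by eventually_elim (use key in blast)
    show "eventually (\<lambda>n. P (faces n d) (c / real n) (\<lambda>Y. T n Y \<and> D n Y) \<le> 1) sequentially"
      using ev by eventually_elim (use key in blast)
  qed
qed


end
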